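(* For all integers $m\ge1$ and $j\ge0$, \[b_{\mathcal{G}}(m,m+j,2)=q^{m+\binom{m+1}{2}+\binom j2}{m-1\brack j-1}.\]
   Context: An overpartition is a partition in which the first occurrence of each part size may be overlined, with parts listed in non-increasing order with respect to $1<\bar1<2<\bar2<\cdots$. A part is of size $t$ if it is $t$ or $\bar t$, and $|\pi|$ is the sum of the sizes of the parts. For $m\ge1$, $\mathcal{G}(m)$ is the set of overpartitions $(\pi_1,\dots,\pi_m)$ such that for every $1\le i<m$, if $\pi_{i+1}$ has size $t$ then $\pi_i\in\{\overline{t+1},\,t+2\}$. $b_{\mathcal{G}}(m,j,2)$ is $\sum q^{|\pi|}$ over $\pi\in\mathcal{G}(m)$ whose largest part has size $j$ and whose smallest part is the non-overlined part $2$. The Gaussian binomial is ${M\brack N}=\frac{(q;q)_M}{(q;q)_N(q;q)_{M-N}}$ for $0\le N\le M$ and $0$ otherwise; in particular ${m-1\brack -1}=0$. *)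

theory Defs
  imports "HOL-Computational_Algebra.Polynomial"
begin

text \<open>A part of an overpartition: (size, overlined?). Size must be at least 1.\<close>
type_synonym opart = "nat \<times> bool"

definition part_size :: "opart \<Rightarrow> nat" where
  "part_size p = fst p"

definition opart_le :: "opart \<Rightarrow> opart \<Rightarrow> bool" where
  "opart_le p p' \<longleftrightarrow> fst p < fst p' \<or> (fst p = fst p' \<and> (snd p \<longrightarrow> snd p'))"

text \<open>Overpartition: parts listed in non-increasing order; only the first occurrence
  of a size may be overlined (so each overlined part occurs at most once).\<close>
definition is_overpartition :: "opart list \<Rightarrow> bool" where
  "is_overpartition xs \<longleftrightarrow>
     (\<forall>p\<in>set xs. part_size p \<ge> 1) \<and>
     sorted_wrt (\<lambda>x y. opart_le y x) xs \<and>
     (\<forall>i k. i < k \<and> k < length xs \<and> part_size (xs!i) = part_size (xs!k) \<longrightarrow> \<not> snd (xs!k))"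

definition opart_weight :: "opart list \<Rightarrow> nat" where
  "opart_weight xs = sum_list (map part_size xs)"

definition G_set :: "nat \<Rightarrow> opart list set" where
  "G_set m = {xs. is_overpartition xs \<and> length xs = m \<and>
     (\<forall>i. Suc i < m \<longrightarrow>
        xs!i \<in> {(part_size (xs!Suc i) + 1, True), (part_size (xs!Suc i) + 2, False)})}"

text \<open>b_G(m,j,2) as a polynomial in q.\<close>
definition bG2 :: "nat \<Rightarrow> nat \<Rightarrow> int poly" where
  "bG2 m j = (\<Sum>xs\<in>{xs\<in>G_set m. part_size (hd xs) = j \<and> last xs = (2, False)}.
              monom 1 (opart_weight xs))"

definition qpoch :: "nat \<Rightarrow> int poly" where
  "qpoch n = (\<Prod>i=1..n. 1 - monom 1 i)"

definition gauss_binom :: "int \<Rightarrow> int \<Rightarrow> int poly" where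
  "gauss_binom M N = (if 0 \<le> N \<and> N \<le> M
     then qpoch (nat M) div (qpoch (nat N) * qpoch (nat (M - N))) else 0)"

end

theory Submission
  imports Defs
begin

fun chain :: "opart list \<Rightarrow> bool" where
  "chain [] = False"
| "chain [x] = (x = (2, False))"
| "chain (x # y # ys) = ((x = (fst y + 1, True) \<or> x = (fst y + 2, False)) \<and> chain (y # ys))"

definition adj :: "opart list \<Rightarrow> bool" where
  "adj xs = (\<forall>i. Suc i < length xs \<longrightarrow>
        xs!i \<in> {(part_size (xs!Suc i) + 1, True), (part_size (xs!Suc i) + 2, False)})"

lemma chain_sorted: "chain xs \<Longrightarrow> sorted_wrt (\<lambda>a b. fst b < fst a) xs \<and> (\<forall>p\<in>set xs. fst p \<ge> 2)"
proof (induction xs rule: chain.induct)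
  case (3 x y ys)
  then have h: "sorted_wrt (\<lambda>a b. fst b < fst a) (y # ys)" "\<forall>p\<in>set (y#ys). fst p \<ge> 2"
    "fst x > fst y" by auto
  have "\<forall>z\<in>set (y#ys). fst z < fst x" using h by auto
  then show ?case using h by auto
qed auto

lemma chain_head: "chain xs \<Longrightarrow> fst (hd xs) \<ge> length xs + 1"
  by (induction xs rule: chain.induct) auto

lemma chain_adj: "chain xs \<Longrightarrow> adj xs \<and> last xs = (2, False)"
proof (induction xs rule: chain.induct)
  case (3 x y ys)
  then have ih: "adj (y#ys)" "last (y#ys) = (2,False)" by auto
  have "adj (x # y # ys)"
    unfolding adj_def
  proof (intro allI impI)
    fix i assume "Suc i < length (x # y # ys)"
    then show "(x # y # ys) ! i \<in> {(part_size ((x # y # ys) ! Suc i) + 1, True),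
          (part_size ((x # y # ys) ! Suc i) + 2, False)}"
      using ih(1) "3.prems" unfolding adj_def part_size_def by (cases i) auto
  qed
  then show ?case using ih by simp
qed (auto simp: adj_def)

lemma adj_chain: "xs \<noteq> [] \<Longrightarrow> adj xs \<Longrightarrow> last xs = (2, False) \<Longrightarrow> chain xs"
proof (induction xs rule: chain.induct)
  case (3 x y ys)
  have "adj (y#ys)" using "3.prems"(2) unfolding adj_def
    by (metis Suc_less_eq length_Cons nth_Cons_Suc)
  moreover have "x \<in> {(part_size y + 1, True), (part_size y + 2, False)}"
    using "3.prems"(2) unfolding adj_def by fastforce
  ultimately show ?case using 3 by (auto simp: part_size_def)
qed auto

lemma chain_overpart: "chain xs \<Longrightarrow> is_overpartition xs"
proof -
  assume c: "chain xs"
  from chain_sorted[OF c] have s: "sorted_wrt (\<lambda>a b. fst b < fst a) xs"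
    and g: "\<forall>p\<in>set xs. fst p \<ge> 2" by auto
  have s2: "sorted_wrt (\<lambda>x y. opart_le y x) xs"
    by (rule sorted_wrt_mono_rel[OF _ s]) (auto simp: opart_le_def)
  have "\<forall>i k. i < k \<and> k < length xs \<and> part_size (xs!i) = part_size (xs!k) \<longrightarrow> \<not> snd (xs!k)"
    using sorted_wrt_nth_less[OF s] by (auto simp: part_size_def) (metis less_irrefl)
  then show ?thesis using g s2 unfolding is_overpartition_def part_size_def by auto
qed

definition S :: "nat \<Rightarrow> nat \<Rightarrow> opart list set" where
  "S m j = {xs. chain xs \<and> length xs = m \<and> fst (hd xs) = j}"

lemma set_eq_S: "m \<ge> 1 \<Longrightarrow>
  {xs\<in>G_set m. part_size (hd xs) = j \<and> last xs = (2, False)} = S m j"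
proof (intro set_eqI iffI)
  fix xs assume m: "m \<ge> 1"
  {
    assume "xs \<in> {xs\<in>G_set m. part_size (hd xs) = j \<and> last xs = (2, False)}"
    then have "adj xs" "length xs = m" "last xs = (2,False)" "fst (hd xs) = j"
      unfolding G_set_def adj_def part_size_def by auto
    moreover have "xs \<noteq> []" using m \<open>length xs = m\<close> by auto
    ultimately show "xs \<in> S m j" using adj_chain[of xs] unfolding S_def by auto
  }
  {
    assume "xs \<in> S m j"
    then have c: "chain xs" "length xs = m" "fst (hd xs) = j" unfolding S_def by auto
    show "xs \<in> {xs\<in>G_set m. part_size (hd xs) = j \<and> last xs = (2, False)}"
      using chain_adj[OF c(1)] chain_overpart[OF c(1)] c unfolding G_set_def adj_def part_size_def
      by auto
  }
qed

lemma S_small: "j \<le> m \<Longrightarrow> S m j = {}"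
  unfolding S_def using chain_head by fastforce

lemma S_one: "S (Suc 0) j = (if j = 2 then {[(2,False)]} else {})"
proof -
  have "xs \<in> S (Suc 0) j \<longleftrightarrow> xs \<in> (if j = 2 then {[(2,False)]} else {})" for xs
    unfolding S_def by (cases xs rule: chain.cases) auto
  then show ?thesis by blast
qed

lemma S_step: "S (Suc (Suc n)) (Suc (Suc j)) =
   (Cons (Suc (Suc j), True)) ` S (Suc n) (Suc j) \<union> (Cons (Suc (Suc j), False)) ` S (Suc n) j"
proof -
  have "xs \<in> S (Suc (Suc n)) (Suc (Suc j)) \<longleftrightarrow>
   xs \<in> (Cons (Suc (Suc j), True)) ` S (Suc n) (Suc j) \<union> (Cons (Suc (Suc j), False)) ` S (Suc n) j"
    for xs
  proof (cases xs rule: chain.cases)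
    case (3 x y ys)
    then show ?thesis unfolding S_def by auto
  qed (auto simp: S_def)
  then show ?thesis by blast
qed

lemma S_finite: "finite (S m j)"
proof (induction m arbitrary: j rule: nat_less_induct)
  case (1 m)
  show ?case
  proof (cases m)
    case 0 then show ?thesis by (simp add: S_def)
  next
    case (Suc n)
    show ?thesis
    proof (cases n)
      case 0 then show ?thesis using Suc by (simp add: S_one)
    next
      case (Suc n')
      show ?thesis
      proof (cases j)
        case 0 then show ?thesis using S_small[of j m] by simp
      next
        case (Suc j')
        show ?thesis
        proof (cases j')
          case 0 then show ?thesis using S_small[of j m] Suc \<open>m = Suc n\<close> by simp
        next
          case (Suc j'')
          then show ?thesis using S_step[of n' j''] 1 \<open>m = Suc n\<close> \<open>n = Suc n'\<close> \<open>j = Suc j'\<close>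
            by simp
        qed
      qed
    qed
  qed
qed

definition F :: "nat \<Rightarrow> nat \<Rightarrow> int poly" where
  "F m j = (\<Sum>xs\<in>S m j. monom 1 (opart_weight xs))"

lemma F_step: "F (Suc (Suc n)) (Suc (Suc j)) =
   monom 1 (Suc (Suc j)) * (F (Suc n) (Suc j) + F (Suc n) j)"
proof -
  let ?A = "(Cons (Suc (Suc j), True)) ` S (Suc n) (Suc j)"
  let ?B = "(Cons (Suc (Suc j), False)) ` S (Suc n) j"
  have d: "?A \<inter> ?B = {}" by auto
  have fA: "finite ?A" "finite ?B" using S_finite by auto
  have w: "opart_weight (p # xs) = fst p + opart_weight xs" for p xs
    by (simp add: opart_weight_def part_size_def)
  have "F (Suc (Suc n)) (Suc (Suc j)) = (\<Sum>xs\<in>?A. monom 1 (opart_weight xs)) + (\<Sum>xs\<in>?B. monom 1 (opart_weight xs))"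
    unfolding F_def S_step by (rule sum.union_disjoint[OF fA d])
  also have "(\<Sum>xs\<in>?A. monom (1::int) (opart_weight xs)) = (\<Sum>xs\<in>S (Suc n) (Suc j). monom 1 (Suc (Suc j)) * monom 1 (opart_weight xs))"
    apply (subst sum.reindex) apply (simp add: inj_on_def) apply (simp add: w mult_monom) done
  also have "(\<Sum>xs\<in>?B. monom (1::int) (opart_weight xs)) = (\<Sum>xs\<in>S (Suc n) j. monom 1 (Suc (Suc j)) * monom 1 (opart_weight xs))"
    apply (subst sum.reindex) apply (simp add: inj_on_def) apply (simp add: w mult_monom) done
  finally show ?thesis unfolding F_def by (simp add: sum_distrib_left distrib_left)
qed

lemma F_small: "j \<le> m \<Longrightarrow> F m j = 0"
  unfolding F_def using S_small by simp

lemma F_one: "F (Suc 0) j = (if j = 2 then monom 1 2 else 0)"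
  unfolding F_def S_one by (simp add: opart_weight_def part_size_def)

fun G :: "nat \<Rightarrow> nat \<Rightarrow> int poly" where
  "G n 0 = 1"
| "G 0 (Suc k) = 0"
| "G (Suc n) (Suc k) = monom 1 (Suc k) * G n (Suc k) + G n k"

lemma G_zero: "n < k \<Longrightarrow> G n k = 0"
proof (induction n arbitrary: k)
  case 0 then show ?case by (cases k) auto
next
  case (Suc n) then show ?case by (cases k) auto
qed

lemma qpoch_Suc: "qpoch (Suc n) = qpoch n * (1 - monom 1 (Suc n))"
  unfolding qpoch_def by (simp add: prod.cl_ivl_Suc)

lemma qpoch_0: "qpoch 0 = 1" unfolding qpoch_def by simp

lemma qpoch_nz: "qpoch n \<noteq> 0"
proof (induction n)
  case 0 then show ?case by (simp add: qpoch_0)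
next
  case (Suc n)
  have "1 - monom (1::int) (Suc n) \<noteq> 0"
  proof
    assume "1 - monom (1::int) (Suc n) = 0"
    then have "coeff (1 - monom (1::int) (Suc n)) 0 = 0" by simp
    then show False by (simp add: coeff_monom)
  qed
  then show ?case using Suc by (simp add: qpoch_Suc)
qed

lemma ring_aux:
  fixes a b qk qr x y Q :: "'a::comm_ring_1"
  assumes "a * (qk * (1 - x)) * qr = Q" "b * qk * (qr * (1 - y)) = Q"
  shows "(x * a + b) * (qk * (1 - x)) * (qr * (1 - y)) = Q * (1 - x * y)"
proof -
  have "(x * a + b) * (qk * (1 - x)) * (qr * (1 - y)) =
      x * (1 - y) * (a * (qk * (1 - x)) * qr) + (1 - x) * (b * qk * (qr * (1 - y)))"
    by (simp add: algebra_simps)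
  also have "\<dots> = Q * (1 - x * y)" using assms by (simp add: algebra_simps)
  finally show ?thesis .
qed

lemma G_qpoch: "k \<le> n \<Longrightarrow> G n k * qpoch k * qpoch (n - k) = qpoch n"
proof (induction n arbitrary: k)
  case 0 then show ?case by (simp add: qpoch_0)
next
  case (Suc n)
  show ?case
  proof (cases k)
    case 0 then show ?thesis by (simp add: qpoch_0)
  next
    case (Suc k')
    show ?thesis
    proof (cases "k' = n")
      case True
      have "G n n = 1" using Suc.IH[of n] qpoch_nz[of n] by (simp add: qpoch_0)
      then have "G (Suc n) k = 1" using True \<open>k = Suc k'\<close> by (simp add: G_zero)
      then show ?thesis using True \<open>k = Suc k'\<close> by (simp add: qpoch_0)
    next
      case False
      then have lt: "Suc k' \<le> n" using Suc.prems \<open>k = Suc k'\<close> by simp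
      define r where "r = n - Suc k'"
      have r: "n = Suc k' + r" using lt unfolding r_def by simp
      have i1: "G n (Suc k') * qpoch (Suc k') * qpoch r = qpoch n"
        using Suc.IH[OF lt] unfolding r_def .
      have r2: "n - k' = Suc r" using lt unfolding r_def by simp
      have i2: "G n k' * qpoch k' * qpoch (Suc r) = qpoch n"
        using Suc.IH[of k'] lt unfolding r2 by simp
      have e: "Suc n - k = Suc r" using r2 \<open>k = Suc k'\<close> lt by simp
      have "G (Suc n) k * qpoch k * qpoch (Suc n - k)
          = (monom 1 (Suc k') * G n (Suc k') + G n k') * (qpoch k' * (1 - monom 1 (Suc k'))) * (qpoch r * (1 - monom 1 (Suc r)))"
        using \<open>k = Suc k'\<close> e by (simp only: qpoch_Suc G.simps)
      also have "\<dots> = qpoch n * (1 - monom 1 (Suc k') * monom 1 (Suc r))"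
        by (rule ring_aux) (use i1 i2 in \<open>simp_all only: qpoch_Suc\<close>)
      also have "\<dots> = qpoch (Suc n)"
      proof -
        have "monom (1::int) (Suc k') * monom 1 (Suc r) = monom 1 (Suc n)"
          by (simp add: mult_monom r)
        then show ?thesis by (simp only: qpoch_Suc)
      qed
      finally show ?thesis .
    qed
  qed
qed

lemma gauss_G: "gauss_binom (int n) (int k) = G n k"
proof (cases "k \<le> n")
  case True
  have "qpoch n = G n k * (qpoch k * qpoch (n - k))" using G_qpoch[OF True] by (simp add: mult.assoc)
  moreover have "qpoch k * qpoch (n - k) \<noteq> 0" using qpoch_nz by simp
  ultimately show ?thesis using True unfolding gauss_binom_def
    by (simp add: nat_diff_distrib of_nat_diff)
next
  case False then show ?thesis by (simp add: gauss_binom_def G_zero)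
qed

lemma choose2_Suc: "Suc n choose 2 = (n choose 2) + n"
  by (simp add: numeral_2_eq_2)

lemma main_F: "F (Suc n) (Suc n + j) =
   monom 1 (Suc n + ((Suc n + 1) choose 2) + (j choose 2)) * (if j = 0 then 0 else G n (j - 1))"
proof (induction n arbitrary: j)
  case 0
  show ?case
  proof (cases j)
    case 0 then show ?thesis by (simp add: F_one)
  next
    case (Suc j') then show ?thesis
      by (cases j') (auto simp: F_one G_zero numeral_2_eq_2)
  qed
next
  case (Suc n)
  show ?case
  proof (cases j)
    case 0
    have "F (Suc (Suc n)) (Suc (Suc n) + j) = monom 1 (Suc (Suc n)) * (F (Suc n) (Suc n) + F (Suc n) n)"
      using 0 F_step[of n n] by simp
    also have "\<dots> = 0" by (simp add: F_small)
    finally show ?thesis using 0 by simp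
  next
    case (Suc k)
    have "F (Suc (Suc n)) (Suc (Suc n) + j) =
       monom 1 (Suc (Suc (Suc n + k))) * (F (Suc n) (Suc n + Suc k) + F (Suc n) (Suc n + k))"
      using Suc F_step[of n "Suc n + k"] by simp
    also have "\<dots> = monom 1 (Suc (Suc (Suc n + k))) *
       (monom 1 (Suc n + ((Suc n + 1) choose 2) + (Suc k choose 2)) * G n k
       + monom 1 (Suc n + ((Suc n + 1) choose 2) + (k choose 2)) * (if k = 0 then 0 else G n (k - 1)))"
      using Suc.IH[of "Suc k"] Suc.IH[of k] by simp
    also have "\<dots> = monom 1 (Suc (Suc n) + ((Suc (Suc n) + 1) choose 2) + (j choose 2)) * G (Suc n) k"
    proof (cases k)
      case 0
      then show ?thesis using Suc by (simp add: mult_monom choose2_Suc algebra_simps)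
    next
      case (Suc l)
      have e1: "Suc (Suc (Suc n + k)) + (Suc n + ((Suc n + 1) choose 2) + (Suc k choose 2))
           = (Suc (Suc n) + ((Suc (Suc n) + 1) choose 2) + (Suc k choose 2)) + Suc l"
        using Suc by (simp add: choose2_Suc)
      have e2: "Suc (Suc (Suc n + k)) + (Suc n + ((Suc n + 1) choose 2) + (k choose 2))
           = (Suc (Suc n) + ((Suc (Suc n) + 1) choose 2) + (Suc k choose 2))"
        using Suc by (simp add: choose2_Suc)
      let ?A = "Suc (Suc (Suc n + k))"
      let ?B1 = "Suc n + ((Suc n + 1) choose 2) + (Suc k choose 2)"
      let ?B0 = "Suc n + ((Suc n + 1) choose 2) + (k choose 2)"
      let ?E = "Suc (Suc n) + ((Suc (Suc n) + 1) choose 2) + (Suc k choose 2)"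
      have "monom (1::int) ?A * (monom 1 ?B1 * G n k + monom 1 ?B0 * (if k = 0 then 0 else G n (k - 1)))
          = monom 1 (?A + ?B1) * G n k + monom 1 (?A + ?B0) * G n l"
        using Suc by (simp add: distrib_left mult.assoc[symmetric] mult_monom del: G.simps)
      also have "\<dots> = monom 1 (?E + Suc l) * G n k + monom 1 ?E * G n l"
        by (simp only: e1 e2)
      also have "\<dots> = monom 1 ?E * G (Suc n) k"
        using Suc by (simp add: distrib_left mult.assoc[symmetric] mult_monom)
      finally show ?thesis using \<open>j = Suc k\<close> by simp
    qed
    finally show ?thesis using Suc by simp
  qed
qed

theorem mainTheorem18:
  fixes m j :: nat
  assumes "m \<ge> 1"
  shows "bG2 m (m + j) =
    monom 1 (m + ((m + 1) choose 2) + (j choose 2)) * gauss_binom (int m - 1) (int j - 1)"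
proof -
  obtain n where n: "m = Suc n" using assms by (cases m) auto
  have b: "bG2 m (m + j) = F m (m + j)"
    unfolding bG2_def F_def set_eq_S[OF assms] ..
  have g: "gauss_binom (int m - 1) (int j - 1) = (if j = 0 then 0 else G n (j - 1))"
  proof (cases j)
    case 0 then show ?thesis by (simp add: gauss_binom_def)
  next
    case (Suc k)
    then have "int m - 1 = int n" "int j - 1 = int k" using n by auto
    then show ?thesis using Suc gauss_G by simp
  qed
  show ?thesis using b g main_F[of n j] n by simp
qed

end
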